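(* Let $P$ be a special product rule, $X$ a set and $D:X\to\mathrm{Terms}(X)$ a function, with $P$-extension $\tilde D$. For all terms $u,v\in\mathrm{Terms}(X)$, if $u\approx v$ then $\tilde Du\approx\tilde Dv$.
   Context: Terms: for a set $X$, $\mathrm{Terms}(X)$ is the set of syntactic terms generated by $u,v::=x\mid 0\mid c\cdot u\mid u+v\mid u*v$ ($x\in X$, $c\in\mathbb Q$). A product rule is a term $P$ over $\{x,\dot x,y,\dot y\}$; $P(s_1,\dots,s_4)$ denotes substitution of $s_1,\dots,s_4$ for $x,\dot x,y,\dot y$. Term equivalence: $u\approx v$ iff $u$ and $v$ denote the same polynomial in the commutative polynomial ring $\mathbb Q[X]$ when $0,c\cdot,+,*$ are read as polynomial operations. $P$ is special if $P(x+y,\dot x+\dot y,z,\dot z)\approx P(x,\dot x,z,\dot z)+P(y,\dot y,z,\dot z)$, $P(x,\dot x,y*z,P(y,\dot y,z,\dot z))\approx P(x*y,P(x,\dot x,y,\dot y),z,\dot z)$, and $P(x,\dot x,y,\dot y)\approx P(y,\dot y,x,\dot x)$. The $P$-extension of $D:X\to\mathrm{Terms}(X)$ is $\tilde D:\mathrm{Terms}(X)\to\mathrm{Terms}(X)$ defined by $\tilde D0=0$, $\tilde Dx=Dx$, $\tilde D(c\cdot\alpha)=c\cdot\tilde D\alpha$, $\tilde D(\alpha+\beta)=\tilde D\alpha+\tilde D\beta$, $\tilde D(\alpha*\beta)=P(\alpha,\tilde D\alpha,\beta,\tilde D\beta)$. *)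

theory Defs
  imports Complex_Main "HOL-Library.Poly_Mapping"
begin

datatype 'x trm =
    Var 'x
  | Zero
  | Scale rat "'x trm"
  | Add "'x trm" "'x trm"
  | Mul "'x trm" "'x trm"

text \<open>The commutative polynomial ring Q[X], realised as the monoid algebra
  of monomials (finitely supported exponent maps) with rational coefficients.\<close>
type_synonym 'x mpoly = "('x \<Rightarrow>\<^sub>0 nat) \<Rightarrow>\<^sub>0 rat"

definition pvar :: "'x \<Rightarrow> 'x mpoly" where
  "pvar x = Poly_Mapping.single (Poly_Mapping.single x 1) 1"

definition pconst :: "rat \<Rightarrow> 'x mpoly" where
  "pconst c = Poly_Mapping.single 0 c"

primrec denote :: "'x trm \<Rightarrow> 'x mpoly" where
  "denote (Var x) = pvar x"
| "denote Zero = 0"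
| "denote (Scale c u) = pconst c * denote u"
| "denote (Add u v) = denote u + denote v"
| "denote (Mul u v) = denote u * denote v"

definition term_equiv :: "'x trm \<Rightarrow> 'x trm \<Rightarrow> bool" (infix "\<approx>" 50) where
  "u \<approx> v \<longleftrightarrow> denote u = denote v"

primrec subst :: "('x \<Rightarrow> 'y trm) \<Rightarrow> 'x trm \<Rightarrow> 'y trm" where
  "subst s (Var x) = s x"
| "subst s Zero = Zero"
| "subst s (Scale c u) = Scale c (subst s u)"
| "subst s (Add u v) = Add (subst s u) (subst s v)"
| "subst s (Mul u v) = Mul (subst s u) (subst s v)"

text \<open>Variables of a product rule: x, x-dot, y, y-dot.\<close>
datatype pv = PX | PXd | PY | PYd

type_synonym prule = "pv trm"

definition app4 :: "prule \<Rightarrow> 'y trm \<Rightarrow> 'y trm \<Rightarrow> 'y trm \<Rightarrow> 'y trm \<Rightarrow> 'y trm" where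
  "app4 P s1 s2 s3 s4 = subst (\<lambda>v. case v of PX \<Rightarrow> s1 | PXd \<Rightarrow> s2 | PY \<Rightarrow> s3 | PYd \<Rightarrow> s4) P"

datatype sv = SX | SXd | SY | SYd | SZ | SZd

definition special :: "prule \<Rightarrow> bool" where
  "special P \<longleftrightarrow>
     app4 P (Add (Var SX) (Var SY)) (Add (Var SXd) (Var SYd)) (Var SZ) (Var SZd)
       \<approx> Add (app4 P (Var SX) (Var SXd) (Var SZ) (Var SZd)) (app4 P (Var SY) (Var SYd) (Var SZ) (Var SZd))
   \<and> app4 P (Var SX) (Var SXd) (Mul (Var SY) (Var SZ)) (app4 P (Var SY) (Var SYd) (Var SZ) (Var SZd))
       \<approx> app4 P (Mul (Var SX) (Var SY)) (app4 P (Var SX) (Var SXd) (Var SY) (Var SYd)) (Var SZ) (Var SZd)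
   \<and> app4 P (Var SX) (Var SXd) (Var SY) (Var SYd) \<approx> app4 P (Var SY) (Var SYd) (Var SX) (Var SXd)"

primrec pext :: "prule \<Rightarrow> ('x \<Rightarrow> 'x trm) \<Rightarrow> 'x trm \<Rightarrow> 'x trm" where
  "pext P D Zero = Zero"
| "pext P D (Var x) = D x"
| "pext P D (Scale c a) = Scale c (pext P D a)"
| "pext P D (Add a b) = Add (pext P D a) (pext P D b)"
| "pext P D (Mul a b) = app4 P a (pext P D a) b (pext P D b)"

end

theory Submission
  imports Defs
begin

definition pmono :: "('x \<Rightarrow> 'a::comm_ring_1) \<Rightarrow> ('x \<Rightarrow>\<^sub>0 nat) \<Rightarrow> 'a" where
  "pmono \<rho> m = (\<Prod>x\<in>Poly_Mapping.keys m. \<rho> x ^ Poly_Mapping.lookup m x)"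

definition ev :: "(rat \<Rightarrow> 'a::comm_ring_1) \<Rightarrow> ('x \<Rightarrow> 'a) \<Rightarrow> 'x mpoly \<Rightarrow> 'a" where
  "ev \<kappa> \<rho> p = (\<Sum>m\<in>Poly_Mapping.keys p. \<kappa> (Poly_Mapping.lookup p m) * pmono \<rho> m)"

definition qhom :: "(rat \<Rightarrow> 'a::comm_ring_1) \<Rightarrow> bool" where
  "qhom \<kappa> \<longleftrightarrow> \<kappa> 0 = 0 \<and> \<kappa> 1 = 1 \<and> (\<forall>a b. \<kappa> (a + b) = \<kappa> a + \<kappa> b) \<and> (\<forall>a b. \<kappa> (a * b) = \<kappa> a * \<kappa> b)"

lemma mono_superset:
  assumes "finite S" "Poly_Mapping.keys m \<subseteq> S"
  shows "pmono \<rho> m = (\<Prod>x\<in>S. \<rho> x ^ Poly_Mapping.lookup m x)"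
  unfolding pmono_def
  by (rule prod.mono_neutral_left) (use assms in \<open>auto simp: in_keys_iff\<close>)

lemma mono_add: "pmono \<rho> (m + n) = pmono \<rho> m * pmono \<rho> n"
proof -
  let ?S = "Poly_Mapping.keys m \<union> Poly_Mapping.keys n"
  have "pmono \<rho> (m + n) = (\<Prod>x\<in>?S. \<rho> x ^ Poly_Mapping.lookup (m + n) x)"
    by (rule mono_superset) (simp_all add: keys_add)
  also have "\<dots> = (\<Prod>x\<in>?S. \<rho> x ^ Poly_Mapping.lookup m x) * (\<Prod>x\<in>?S. \<rho> x ^ Poly_Mapping.lookup n x)"
    by (simp add: lookup_add power_add prod.distrib)
  also have "\<dots> = pmono \<rho> m * pmono \<rho> n"
    by (subst (1 2) mono_superset[of "?S"]) auto
  finally show ?thesis .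
qed

lemma mono_zero [simp]: "pmono \<rho> 0 = 1"
  by (simp add: pmono_def)

lemma mono_single [simp]: "pmono \<rho> (Poly_Mapping.single x 1) = \<rho> x"
  by (simp add: pmono_def)

lemma ev_superset:
  assumes "qhom \<kappa>" "finite S" "Poly_Mapping.keys p \<subseteq> S"
  shows "ev \<kappa> \<rho> p = (\<Sum>m\<in>S. \<kappa> (Poly_Mapping.lookup p m) * pmono \<rho> m)"
  unfolding ev_def
  by (rule sum.mono_neutral_left) (use assms in \<open>auto simp: in_keys_iff qhom_def\<close>)

lemma ev_add:
  assumes "qhom \<kappa>"
  shows "ev \<kappa> \<rho> (p + q) = ev \<kappa> \<rho> p + ev \<kappa> \<rho> q"
proof -
  let ?S = "Poly_Mapping.keys p \<union> Poly_Mapping.keys q"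
  have "ev \<kappa> \<rho> (p + q) = (\<Sum>m\<in>?S. \<kappa> (Poly_Mapping.lookup (p + q) m) * pmono \<rho> m)"
    by (rule ev_superset) (simp_all add: assms keys_add)
  also have "\<dots> = (\<Sum>m\<in>?S. \<kappa> (Poly_Mapping.lookup p m) * pmono \<rho> m) + (\<Sum>m\<in>?S. \<kappa> (Poly_Mapping.lookup q m) * pmono \<rho> m)"
    using assms by (simp add: lookup_add qhom_def distrib_right sum.distrib)
  also have "\<dots> = ev \<kappa> \<rho> p + ev \<kappa> \<rho> q"
    by (subst (1 2) ev_superset[OF assms, of "?S"]) auto
  finally show ?thesis .
qed

lemma ev_zero [simp]: "ev \<kappa> \<rho> 0 = 0"
  by (simp add: ev_def)

lemma ev_single:
  assumes "qhom \<kappa>"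
  shows "ev \<kappa> \<rho> (Poly_Mapping.single m c) = \<kappa> c * pmono \<rho> m"
  using assms by (simp add: ev_def qhom_def)

lemma ev_sum:
  assumes "qhom \<kappa>"
  shows "ev \<kappa> \<rho> (sum f A) = (\<Sum>a\<in>A. ev \<kappa> \<rho> (f a))"
  by (induction A rule: infinite_finite_induct) (simp_all add: ev_add assms)

lemma poly_expand: "(p :: 'k \<Rightarrow>\<^sub>0 'b::comm_monoid_add) = (\<Sum>m\<in>Poly_Mapping.keys p. Poly_Mapping.single m (Poly_Mapping.lookup p m))"
proof (rule poly_mapping_eqI)
  fix k
  show "Poly_Mapping.lookup p k = Poly_Mapping.lookup (\<Sum>m\<in>Poly_Mapping.keys p. Poly_Mapping.single m (Poly_Mapping.lookup p m)) k"
    by (simp add: lookup_sum lookup_single when_def in_keys_iff)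
qed

lemma ev_mult:
  assumes "qhom \<kappa>"
  shows "ev \<kappa> \<rho> (p * q) = ev \<kappa> \<rho> p * ev \<kappa> \<rho> q"
proof -
  let ?P = "Poly_Mapping.keys p" and ?Q = "Poly_Mapping.keys q"
  have "p * q = (\<Sum>m\<in>?P. Poly_Mapping.single m (Poly_Mapping.lookup p m)) * (\<Sum>n\<in>?Q. Poly_Mapping.single n (Poly_Mapping.lookup q n))"
    by (metis poly_expand)
  also have "\<dots> = (\<Sum>m\<in>?P. \<Sum>n\<in>?Q. Poly_Mapping.single (m + n) (Poly_Mapping.lookup p m * Poly_Mapping.lookup q n))"
    by (simp add: sum_product mult_single)
  finally have pq: "p * q = \<dots>" .
  have "ev \<kappa> \<rho> (p * q) = (\<Sum>m\<in>?P. \<Sum>n\<in>?Q. (\<kappa> (Poly_Mapping.lookup p m) * pmono \<rho> m) * (\<kappa> (Poly_Mapping.lookup q n) * pmono \<rho> n))"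
    unfolding pq using assms
    by (simp add: ev_sum ev_single mono_add qhom_def mult_ac)
  also have "\<dots> = ev \<kappa> \<rho> p * ev \<kappa> \<rho> q"
    by (simp add: ev_def sum_product)
  finally show ?thesis .
qed

lemma qhom_pconst: "qhom pconst"
  by (simp add: qhom_def pconst_def single_add mult_single)

lemma ev_pvar: "qhom \<kappa> \<Longrightarrow> ev \<kappa> \<rho> (pvar x) = \<rho> x"
  by (simp add: pvar_def ev_single qhom_def pmono_def)

lemma ev_pconst: "qhom \<kappa> \<Longrightarrow> ev \<kappa> \<rho> (pconst c) = \<kappa> c"
  by (simp add: pconst_def ev_single)

definition thom :: "(rat \<Rightarrow> 'a::comm_ring_1) \<Rightarrow> ('x trm \<Rightarrow> 'a) \<Rightarrow> bool" where
  "thom \<kappa> h \<longleftrightarrow> h Zero = 0 \<and> (\<forall>c u. h (Scale c u) = \<kappa> c * h u)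
     \<and> (\<forall>u v. h (Add u v) = h u + h v) \<and> (\<forall>u v. h (Mul u v) = h u * h v)"

lemma thom_ev:
  assumes "qhom \<kappa>" "thom \<kappa> h"
  shows "h u = ev \<kappa> (\<lambda>x. h (Var x)) (denote u)"
  using assms
  by (induction u) (simp_all add: thom_def ev_pvar ev_add ev_mult ev_pconst)

lemma denote_subst: "denote (subst \<sigma> t) = ev pconst (\<lambda>v. denote (\<sigma> v)) (denote t)"
proof -
  have "thom pconst (\<lambda>t. denote (subst \<sigma> t))" by (simp add: thom_def)
  from thom_ev[OF qhom_pconst this] show ?thesis by simp
qed

lemma ev_subst:
  assumes "qhom \<kappa>"
  shows "ev \<kappa> \<rho> (denote (subst \<sigma> t)) = ev \<kappa> (\<lambda>v. ev \<kappa> \<rho> (denote (\<sigma> v))) (denote t)"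
proof -
  have "thom \<kappa> (\<lambda>t. ev \<kappa> \<rho> (denote (subst \<sigma> t)))"
    using assms by (simp add: thom_def ev_add ev_mult ev_pconst)
  from thom_ev[OF assms this] show ?thesis by simp
qed


definition env4 :: "'a \<Rightarrow> 'a \<Rightarrow> 'a \<Rightarrow> 'a \<Rightarrow> pv \<Rightarrow> 'a" where
  "env4 a b c d = (\<lambda>v. case v of PX \<Rightarrow> a | PXd \<Rightarrow> b | PY \<Rightarrow> c | PYd \<Rightarrow> d)"

definition G :: "prule \<Rightarrow> 'y mpoly \<Rightarrow> 'y mpoly \<Rightarrow> 'y mpoly \<Rightarrow> 'y mpoly \<Rightarrow> 'y mpoly" where
  "G Q a b c d = ev pconst (env4 a b c d) (denote Q)"

lemma denote_app4: "denote (app4 Q s1 s2 s3 s4) = G Q (denote s1) (denote s2) (denote s3) (denote s4)"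
proof -
  have "(\<lambda>v. denote (case v of PX \<Rightarrow> s1 | PXd \<Rightarrow> s2 | PY \<Rightarrow> s3 | PYd \<Rightarrow> s4))
     = env4 (denote s1) (denote s2) (denote s3) (denote s4)"
    by (auto simp: env4_def split: pv.split)
  then show ?thesis unfolding app4_def denote_subst G_def by simp
qed

lemma ev_app4: "ev pconst \<rho> (denote (app4 Q s1 s2 s3 s4)) =
   G Q (ev pconst \<rho> (denote s1)) (ev pconst \<rho> (denote s2)) (ev pconst \<rho> (denote s3)) (ev pconst \<rho> (denote s4))"
proof -
  have "(\<lambda>v. ev pconst \<rho> (denote (case v of PX \<Rightarrow> s1 | PXd \<Rightarrow> s2 | PY \<Rightarrow> s3 | PYd \<Rightarrow> s4)))
     = env4 (ev pconst \<rho> (denote s1)) (ev pconst \<rho> (denote s2)) (ev pconst \<rho> (denote s3)) (ev pconst \<rho> (denote s4))"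
    by (auto simp: env4_def split: pv.split)
  then show ?thesis unfolding app4_def ev_subst[OF qhom_pconst] G_def by simp
qed

lemma special_props:
  fixes x xd y yd z zd :: "'y mpoly"
  assumes "special Q"
  shows "G Q (x+y) (xd+yd) z zd = G Q x xd z zd + G Q y yd z zd"
    and "G Q x xd (y*z) (G Q y yd z zd) = G Q (x*y) (G Q x xd y yd) z zd"
    and "G Q x xd y yd = G Q y yd x xd"
proof -
  define \<rho> where "\<rho> = (\<lambda>v. case v of SX \<Rightarrow> x | SXd \<Rightarrow> xd | SY \<Rightarrow> y | SYd \<Rightarrow> yd | SZ \<Rightarrow> z | SZd \<Rightarrow> zd)"
  have r: "\<rho> SX = x" "\<rho> SXd = xd" "\<rho> SY = y" "\<rho> SYd = yd" "\<rho> SZ = z" "\<rho> SZd = zd"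
    by (simp_all add: \<rho>_def)
  note S = assms[unfolded special_def term_equiv_def]
  note ss = arg_cong[OF S[THEN conjunct1], of "ev pconst \<rho>"]
    arg_cong[OF S[THEN conjunct2, THEN conjunct1], of "ev pconst \<rho>"]
    arg_cong[OF S[THEN conjunct2, THEN conjunct2], of "ev pconst \<rho>"]
  show "G Q (x+y) (xd+yd) z zd = G Q x xd z zd + G Q y yd z zd"
    using ss(1) by (simp only: ev_app4 denote.simps ev_add[OF qhom_pconst] ev_mult[OF qhom_pconst] ev_pvar[OF qhom_pconst] r)
  show "G Q x xd (y*z) (G Q y yd z zd) = G Q (x*y) (G Q x xd y yd) z zd"
    using ss(2) by (simp only: ev_app4 denote.simps ev_add[OF qhom_pconst] ev_mult[OF qhom_pconst] ev_pvar[OF qhom_pconst] r)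
  show "G Q x xd y yd = G Q y yd x xd"
    using ss(3) by (simp only: ev_app4 denote.simps ev_add[OF qhom_pconst] ev_mult[OF qhom_pconst] ev_pvar[OF qhom_pconst] r)
qed

definition pnorm :: "prule \<Rightarrow> prule" where
  "pnorm Q = (if special Q then Q else Zero)"

lemma special_Zero: "special Zero"
  by (simp add: special_def app4_def term_equiv_def)

lemma special_pnorm: "special (pnorm Q)"
  by (simp add: pnorm_def special_Zero)

definition Fq :: "prule \<Rightarrow> 'y mpoly \<Rightarrow> 'y mpoly \<Rightarrow> 'y mpoly \<Rightarrow> 'y mpoly \<Rightarrow> 'y mpoly" where
  "Fq Q = G (pnorm Q)"

lemma Fq_add1: "Fq Q (x+y) (xd+yd) z zd = Fq Q x xd z zd + Fq Q y yd z zd"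
  unfolding Fq_def by (rule special_props(1)[OF special_pnorm])

lemma Fq_assoc: "Fq Q x xd (y*z) (Fq Q y yd z zd) = Fq Q (x*y) (Fq Q x xd y yd) z zd"
  unfolding Fq_def by (rule special_props(2)[OF special_pnorm])

lemma Fq_comm: "Fq Q x xd y yd = Fq Q y yd x xd"
  unfolding Fq_def by (rule special_props(3)[OF special_pnorm])

lemma Fq_add2: "Fq Q z zd (x+y) (xd+yd) = Fq Q z zd x xd + Fq Q z zd y yd"
  by (simp only: Fq_comm[of Q z zd "x+y" "xd+yd"] Fq_comm[of Q z zd x xd] Fq_comm[of Q z zd y yd] Fq_add1)

lemma Fq_zero1: "Fq Q 0 0 z zd = 0"
  using Fq_add1[of Q 0 0 0 0 z zd] by simp

lemma Fq_zero2: "Fq Q z zd 0 0 = 0"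
  by (simp only: Fq_comm[of Q z zd 0 0] Fq_zero1)

lemma Fq_neg1: "Fq Q (-x) (-xd) z zd = - Fq Q x xd z zd"
  using Fq_add1[of Q x "-x" xd "-xd" z zd] by (simp add: Fq_zero1 add_eq_0_iff)

lemma Fq_nat1: "Fq Q (of_nat n * x) (of_nat n * xd) z zd = of_nat n * Fq Q x xd z zd"
proof (induction n)
  case 0 then show ?case by (simp add: Fq_zero1)
next
  case (Suc n)
  have e: "of_nat (Suc n) * w = w + of_nat n * w" for w :: "'a mpoly"
    by (simp add: algebra_simps)
  show ?case by (simp only: e Fq_add1 Suc.IH)
qed

lemma Fq_int1: "Fq Q (of_int k * x) (of_int k * xd) z zd = of_int k * Fq Q x xd z zd"
proof (cases k rule: int_cases)
  case (nonneg n)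
  then show ?thesis using Fq_nat1[of Q n x xd z zd] by simp
next
  case (neg n)
  have e: "of_int k * w = of_nat (Suc n) * (- w)" for w :: "'a mpoly"
  proof -
    have "(of_int k :: 'a mpoly) = - of_nat (Suc n)"
      using neg by (metis of_int_minus of_int_of_nat_eq)
    then show ?thesis by (simp only: mult_minus_left mult_minus_right)
  qed
  show ?thesis
    by (simp only: e Fq_nat1 Fq_neg1)
qed

lemma pconst_mult: "pconst (a * b) = pconst a * pconst b"
  by (simp add: pconst_def mult_single)
lemma pconst_add: "pconst (a + b) = pconst a + pconst b"
  by (simp add: pconst_def single_add)
lemma pconst_0 [simp]: "pconst 0 = 0"
  by (simp add: pconst_def)
lemma pconst_1 [simp]: "pconst 1 = 1"
  by (simp add: pconst_def)
lemma pconst_int: "pconst (of_int k) = of_int k"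
  by (simp add: pconst_def)

lemma rat_split: fixes c :: rat obtains a b where "c = of_int a / of_int b" "b \<noteq> 0"
proof -
  obtain a b where "c = Fract a b" "b > 0" by (cases c rule: Rat_cases) blast
  then show ?thesis using that[of a b] by (simp add: Fract_of_int_quotient)
qed

lemma Fq_scal1: "Fq Q (pconst c * x) (pconst c * xd) z zd = pconst c * Fq Q x xd z zd"
proof -
  obtain a b where ab: "c = of_int a / of_int b" "b \<noteq> 0"
    by (rule rat_split)
  define e where "e = (pconst (1 / of_int b) :: 'a mpoly)"
  define y where "y = e * x"
  define yd where "yd = e * xd"
  have "(of_int b :: rat) * (1 / of_int b) = 1" using ab(2) by simp
  then have inv: "of_int b * e = 1"
    unfolding e_def by (metis pconst_mult pconst_int pconst_1)
  have "(of_int a / of_int b :: rat) = of_int a * (1 / of_int b)" by simp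
  then have cc: "pconst c = of_int a * e"
    unfolding e_def ab(1) by (metis pconst_mult pconst_int)
  have xy: "x = of_int b * y" "xd = of_int b * yd"
    unfolding y_def yd_def by (simp_all only: mult.assoc[symmetric] inv mult_1_left)
  have "Fq Q x xd z zd = of_int b * Fq Q y yd z zd"
    unfolding xy by (rule Fq_int1)
  then have fy: "Fq Q y yd z zd = e * Fq Q x xd z zd"
    by (simp only: mult.assoc[symmetric] mult.commute[of e] inv mult_1_left)
  have "Fq Q (pconst c * x) (pconst c * xd) z zd = Fq Q (of_int a * y) (of_int a * yd) z zd"
    unfolding cc y_def yd_def by (simp only: mult.assoc)
  also have "\<dots> = of_int a * Fq Q y yd z zd" by (rule Fq_int1)
  also have "\<dots> = pconst c * Fq Q x xd z zd" by (simp only: fy cc mult.assoc)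
  finally show ?thesis .
qed

lemma Fq_scal2: "Fq Q z zd (pconst c * x) (pconst c * xd) = pconst c * Fq Q z zd x xd"
  by (simp only: Fq_comm[of Q z zd "pconst c * x" "pconst c * xd"] Fq_comm[of Q z zd x xd] Fq_scal1)


datatype 'x pt = PT (c1: "prule \<Rightarrow> rat") (c2: "prule \<Rightarrow> 'x mpoly") (c3: "prule \<Rightarrow> 'x mpoly")

lemma pt_eqI: "(\<And>Q. c1 a Q = c1 b Q) \<Longrightarrow> (\<And>Q. c2 a Q = c2 b Q) \<Longrightarrow> (\<And>Q. c3 a Q = c3 b Q) \<Longrightarrow> a = b"
  by (rule pt.expand) auto

lemma assoc3:
  "pconst (r*s) * l + pconst t * (pconst r * k + pconst s * m + Fq Q p m q k)
     + Fq Q (pconst r * q + pconst s * p + p*q) (pconst r * k + pconst s * m + Fq Q p m q k) w l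
   = pconst r * (pconst s * l + pconst t * k + Fq Q q k w l) + pconst (s*t) * m
     + Fq Q p m (pconst s * w + pconst t * q + q*w) (pconst s * l + pconst t * k + Fq Q q k w l)"
proof -
  have L: "Fq Q (pconst r * q + pconst s * p + p*q) (pconst r * k + pconst s * m + Fq Q p m q k) w l
      = pconst r * Fq Q q k w l + pconst s * Fq Q p m w l + Fq Q (p*q) (Fq Q p m q k) w l"
    by (simp only: Fq_add1 Fq_scal1)
  have R: "Fq Q p m (pconst s * w + pconst t * q + q*w) (pconst s * l + pconst t * k + Fq Q q k w l)
      = pconst s * Fq Q p m w l + pconst t * Fq Q p m q k + Fq Q (p*q) (Fq Q p m q k) w l"
    by (simp only: Fq_add2 Fq_scal2 Fq_assoc)
  show ?thesis unfolding L R by (simp add: pconst_mult algebra_simps)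
qed

instantiation pt :: (type) comm_ring_1
begin
definition zero_pt_def: "0 = PT (\<lambda>_. 0) (\<lambda>_. 0) (\<lambda>_. 0)"
definition one_pt_def: "1 = PT (\<lambda>_. 1) (\<lambda>_. 0) (\<lambda>_. 0)"
definition plus_pt_def: "a + b = PT (\<lambda>Q. c1 a Q + c1 b Q) (\<lambda>Q. c2 a Q + c2 b Q) (\<lambda>Q. c3 a Q + c3 b Q)"
definition uminus_pt_def: "- a = PT (\<lambda>Q. - c1 a Q) (\<lambda>Q. - c2 a Q) (\<lambda>Q. - c3 a Q)"
definition minus_pt_def: "a - b = PT (\<lambda>Q. c1 a Q - c1 b Q) (\<lambda>Q. c2 a Q - c2 b Q) (\<lambda>Q. c3 a Q - c3 b Q)"
definition times_pt_def: "a * b = PT (\<lambda>Q. c1 a Q * c1 b Q)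
   (\<lambda>Q. pconst (c1 a Q) * c2 b Q + pconst (c1 b Q) * c2 a Q + c2 a Q * c2 b Q)
   (\<lambda>Q. pconst (c1 a Q) * c3 b Q + pconst (c1 b Q) * c3 a Q + Fq Q (c2 a Q) (c3 a Q) (c2 b Q) (c3 b Q))"
instance
proof
  fix a b c :: "'a pt"
  show "a * b * c = a * (b * c)"
    apply (rule pt_eqI)
      apply (simp add: times_pt_def)
     apply (simp add: times_pt_def pconst_mult algebra_simps)
    apply (simp only: times_pt_def pt.sel)
    apply (rule assoc3)
    done
  show "a * b = b * a"
    by (rule pt_eqI) (simp_all add: times_pt_def Fq_comm[of _ "c2 a _"] algebra_simps)
  show "1 * a = a"
    by (rule pt_eqI) (simp_all add: times_pt_def one_pt_def Fq_zero1)
  show "(a + b) * c = a * c + b * c"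
    by (rule pt_eqI) (simp_all add: times_pt_def plus_pt_def Fq_add1 pconst_add algebra_simps)
  show "(0::'a pt) \<noteq> 1"
    by (simp add: zero_pt_def one_pt_def fun_eq_iff)
  show "a + b + c = a + (b + c)"
    by (rule pt_eqI) (simp_all add: plus_pt_def algebra_simps)
  show "a + b = b + a"
    by (rule pt_eqI) (simp_all add: plus_pt_def algebra_simps)
  show "0 + a = a"
    by (rule pt_eqI) (simp_all add: plus_pt_def zero_pt_def)
  show "- a + a = 0"
    by (rule pt_eqI) (simp_all add: plus_pt_def zero_pt_def uminus_pt_def)
  show "a - b = a + - b"
    by (rule pt_eqI) (simp_all add: plus_pt_def minus_pt_def uminus_pt_def)
qed
end


definition kT :: "rat \<Rightarrow> 'x pt" where
  "kT c = PT (\<lambda>_. c) (\<lambda>_. 0) (\<lambda>_. 0)"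

lemma qhom_kT: "qhom kT"
  unfolding qhom_def
proof (intro conjI allI)
  show "kT 0 = 0" by (simp add: kT_def zero_pt_def)
  show "kT 1 = 1" by (simp add: kT_def one_pt_def)
  fix a b
  show "kT (a + b) = kT a + kT b" by (simp add: kT_def plus_pt_def)
  show "kT (a * b) = kT a * kT b" by (simp add: kT_def times_pt_def Fq_zero1)
qed

definition hT :: "('x \<Rightarrow> 'x trm) \<Rightarrow> 'x trm \<Rightarrow> 'x pt" where
  "hT D u = PT (\<lambda>_. 0) (\<lambda>_. denote u) (\<lambda>Q. denote (pext (pnorm Q) D u))"

lemma thom_hT: "thom kT (hT D)"
  unfolding thom_def
proof (intro conjI allI)
  show "hT D Zero = 0" by (simp add: hT_def zero_pt_def)
  fix c u v
  show "hT D (Scale c u) = kT c * hT D u"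
    by (simp add: hT_def kT_def times_pt_def Fq_zero1)
  show "hT D (Add u v) = hT D u + hT D v"
    by (simp add: hT_def plus_pt_def)
  show "hT D (Mul u v) = hT D u * hT D v"
    by (simp add: hT_def times_pt_def denote_app4 Fq_def)
qed

theorem mainTheorem8:
  fixes P :: prule and D :: "'x \<Rightarrow> 'x trm" and u v :: "'x trm"
  assumes "special P"
    and "u \<approx> v"
  shows "pext P D u \<approx> pext P D v"
proof -
  have "hT D u = hT D v"
    using thom_ev[OF qhom_kT thom_hT, of D] assms(2) unfolding term_equiv_def by metis
  then have "c3 (hT D u) P = c3 (hT D v) P" by simp
  moreover have "pnorm P = P" using assms(1) by (simp add: pnorm_def)
  ultimately show ?thesis by (simp add: hT_def term_equiv_def)
qed

end
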